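(* For every strategy profile $s$: if $\mathsf{SPE}(s)$ then $\mathsf{Nash}(s)$.
   Context: Let $P=\{A,B\}$ and $\mathrm{Choice}=\{d,r\}$; a payoff function is $f:P\to\mathbb{R}$. Strategy profiles are elements of the final coalgebra of $X\mapsto\mathbb{R}^P+P\times\mathrm{Choice}\times X\times X$ (finite or infinite trees $\langle f\rangle$ or $\langle p,c,s_d,s_r\rangle$); $\sim_s$ denotes bisimilarity of profiles. The payoff $\widehat{s}$ is the partial function given by $\widehat{\langle f\rangle}=f$, $\widehat{\langle p,d,s_d,s_r\rangle}=\widehat{s_d}$, $\widehat{\langle p,r,s_d,s_r\rangle}=\widehat{s_r}$ (undefined if the unfolding does not terminate). Convergence $\downarrow$: least predicate with $\downarrow(s)$ iff $s=\langle f\rangle$, or $s=\langle p,d,s_d,s_r\rangle\wedge\downarrow(s_d)$, or $s=\langle p,r,s_d,s_r\rangle\wedge\downarrow(s_r)$. Strong convergence $\Downarrow$: greatest predicate with $\Downarrow(s)$ iff $s=\langle f\rangle$, or $s=\langle p,c,s_d,s_r\rangle$ with $\downarrow(s),\Downarrow(s_d),\Downarrow(s_r)$. For a predicate $\Phi$, $\Box\Phi$ is the greatest predicate such that $\Box\Phi(s)$ iff $\Phi(s)$ and, whenever $s=\langle p,c,s_d,s_r\rangle$, $\Box\Phi(s_d)$ and $\Box\Phi(s_r)$. $\mathsf{PE}(s)$ holds iff $\Downarrow(s)$ and (if $s=\langle p,d,s_d,s_r\rangle$ then $\widehat{s_d}(p)\ge\widehat{s_r}(p)$) and (if $s=\langle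 p,r,s_d,s_r\rangle$ then $\widehat{s_r}(p)\ge\widehat{s_d}(p)$); $\mathsf{SPE}=\Box\,\mathsf{PE}$. For an agent $p$, the convertibility relation $\vdash_p\dashv$ is the least (inductively defined) relation such that: if $s\sim_s s'$ then $s\vdash_p\dashv s'$; if $s_1\vdash_p\dashv s_1'$ and $s_2\vdash_p\dashv s_2'$ then $\langle p,c,s_1,s_2\rangle\vdash_p\dashv\langle p,c',s_1',s_2'\rangle$ for any $c,c'\in\mathrm{Choice}$; and if $s_1\vdash_p\dashv s_1'$ and $s_2\vdash_p\dashv s_2'$ then $\langle p',c,s_1,s_2\rangle\vdash_p\dashv\langle p',c,s_1',s_2'\rangle$ for any agent $p'$ and $c\in\mathrm{Choice}$. $\mathsf{Nash}(s)$ means: for every agent $p$ and every profile $s'$ with $s\vdash_p\dashv s'$, the payoffs $\widehat{s}(p)$ and $\widehat{s'}(p)$ are defined and $\widehat{s}(p)\ge\widehat{s'}(p)$. *)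

theory Defs
  imports Complex_Main
begin

datatype agent = A | B
datatype choice = d | r

type_synonym payoff_fun = "agent \<Rightarrow> real"

codatatype strat = Leaf payoff_fun | Node agent choice strat strat

coinductive bisim :: "strat \<Rightarrow> strat \<Rightarrow> bool" where
  bisim_leaf: "bisim (Leaf f) (Leaf f)"
| bisim_node: "bisim s1 s1' \<Longrightarrow> bisim s2 s2' \<Longrightarrow> bisim (Node p c s1 s2) (Node p c s1' s2')"

text \<open>Graph of the partial payoff function: payoff_rel s f iff the unfolding of s terminates with payoff f.\<close>
inductive payoff_rel :: "strat \<Rightarrow> payoff_fun \<Rightarrow> bool" where
  "payoff_rel (Leaf f) f"
| "payoff_rel sd f \<Longrightarrow> payoff_rel (Node p d sd sr) f"
| "payoff_rel sr f \<Longrightarrow> payoff_rel (Node p r sd sr) f"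

definition payoff :: "strat \<Rightarrow> payoff_fun option" where
  "payoff s = (if (\<exists>f. payoff_rel s f) then Some (THE f. payoff_rel s f) else None)"

inductive conv :: "strat \<Rightarrow> bool" where
  "conv (Leaf f)"
| "conv sd \<Longrightarrow> conv (Node p d sd sr)"
| "conv sr \<Longrightarrow> conv (Node p r sd sr)"

coinductive sconv :: "strat \<Rightarrow> bool" where
  "sconv (Leaf f)"
| "conv (Node p c sd sr) \<Longrightarrow> sconv sd \<Longrightarrow> sconv sr \<Longrightarrow> sconv (Node p c sd sr)"

coinductive always :: "(strat \<Rightarrow> bool) \<Rightarrow> strat \<Rightarrow> bool" for \<Phi> where
  "\<Phi> (Leaf f) \<Longrightarrow> always \<Phi> (Leaf f)"
| "\<Phi> (Node p c sd sr) \<Longrightarrow> always \<Phi> sd \<Longrightarrow> always \<Phi> sr \<Longrightarrow> always \<Phi> (Node p c sd sr)"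

definition PE :: "strat \<Rightarrow> bool" where
  "PE s \<longleftrightarrow> sconv s
     \<and> (\<forall>p sd sr. s = Node p d sd sr \<longrightarrow> the (payoff sd) p \<ge> the (payoff sr) p)
     \<and> (\<forall>p sd sr. s = Node p r sd sr \<longrightarrow> the (payoff sr) p \<ge> the (payoff sd) p)"

definition SPE :: "strat \<Rightarrow> bool" where
  "SPE = always PE"

inductive convertible :: "agent \<Rightarrow> strat \<Rightarrow> strat \<Rightarrow> bool" for p where
  conv_bisim: "bisim s s' \<Longrightarrow> convertible p s s'"
| conv_own: "convertible p s1 s1' \<Longrightarrow> convertible p s2 s2' \<Longrightarrow>
     convertible p (Node p c s1 s2) (Node p c' s1' s2')"
| conv_other: "convertible p s1 s1' \<Longrightarrow> convertible p s2 s2' \<Longrightarrow>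
     convertible p (Node p' c s1 s2) (Node p' c s1' s2')"

definition Nash :: "strat \<Rightarrow> bool" where
  "Nash s \<longleftrightarrow> (\<forall>p s'. convertible p s s' \<longrightarrow>
      payoff s \<noteq> None \<and> payoff s' \<noteq> None \<and> the (payoff s) p \<ge> the (payoff s') p)"

end

theory Submission
  imports Defs
begin

lemma bisim_eq: "bisim s s' \<Longrightarrow> s = s'"
proof (coinduction arbitrary: s s' rule: strat.coinduct)
  case (Eq_strat s s')
  then show ?case by (cases rule: bisim.cases) auto
qed

inductive_cases rel_leafE: "payoff_rel (Leaf f) g"
inductive_cases rel_dE: "payoff_rel (Node p d s1 s2) g"
inductive_cases rel_rE: "payoff_rel (Node p r s1 s2) g"

lemma payoff_rel_fun: "payoff_rel s f \<Longrightarrow> payoff_rel s g \<Longrightarrow> f = g"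
proof (induction arbitrary: g rule: payoff_rel.induct)
  case (1 f) then show ?case by (blast elim: rel_leafE)
next
  case (2 sd f p sr) then show ?case by (blast elim: rel_dE)
next
  case (3 sr f p sd) then show ?case by (blast elim: rel_rE)
qed

lemma payoff_Some: "payoff_rel s f \<Longrightarrow> payoff s = Some f"
  unfolding payoff_def using payoff_rel_fun by (auto intro: the_equality)

lemma conv_rel: "conv s \<Longrightarrow> \<exists>f. payoff_rel s f"
  by (induction rule: conv.induct) (auto intro: payoff_rel.intros)

lemma sconv_conv: "sconv s \<Longrightarrow> conv s"
  by (cases rule: sconv.cases) (auto intro: conv.intros)

lemma SPE_conv: "always PE s \<Longrightarrow> \<exists>f. payoff_rel s f"
  by (metis always.cases PE_def sconv_conv conv_rel)

lemma rel_d: "payoff_rel (Node p d s1 s2) f \<longleftrightarrow> payoff_rel s1 f"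
  by (blast elim: rel_dE intro: payoff_rel.intros)

lemma rel_r: "payoff_rel (Node p r s1 s2) f \<longleftrightarrow> payoff_rel s2 f"
  by (blast elim: rel_rE intro: payoff_rel.intros)

lemma payoff_node_d: "payoff (Node p d s1 s2) = payoff s1"
  unfolding payoff_def rel_d ..

lemma payoff_node_r: "payoff (Node p r s1 s2) = payoff s2"
  unfolding payoff_def rel_r ..

lemma main:
  "convertible p s s' \<Longrightarrow> always PE s \<Longrightarrow>
    (\<exists>f. payoff_rel s' f) \<and> the (payoff s') p \<le> the (payoff s) p"
proof (induction rule: convertible.induct)
  case (conv_bisim s s')
  then show ?case using bisim_eq SPE_conv by blast
next
  case (conv_own s1 s1' s2 s2' c c')
  from conv_own.prems have a1: "always PE s1" and a2: "always PE s2"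
    and pe: "PE (Node p c s1 s2)"
    by (auto elim: always.cases)
  from conv_own.IH a1 a2 have i1: "(\<exists>f. payoff_rel s1' f) \<and> the (payoff s1') p \<le> the (payoff s1) p"
    and i2: "(\<exists>f. payoff_rel s2' f) \<and> the (payoff s2') p \<le> the (payoff s2) p" by auto
  have le: "the (payoff s1) p \<le> the (payoff (Node p c s1 s2)) p \<and> the (payoff s2) p \<le> the (payoff (Node p c s1 s2)) p"
    using pe unfolding PE_def by (cases c) (auto simp: payoff_node_d payoff_node_r)
  show ?case
  proof (cases c')
    case d then show ?thesis using i1 le
      by (auto simp: payoff_node_d intro: payoff_rel.intros)
  next
    case r then show ?thesis using i2 le
      by (auto simp: payoff_node_r intro: payoff_rel.intros)
  qed
next
  case (conv_other s1 s1' s2 s2' p' c)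
  from conv_other.prems have a1: "always PE s1" and a2: "always PE s2"
    by (auto elim: always.cases)
  from conv_other.IH a1 a2 have i1: "(\<exists>f. payoff_rel s1' f) \<and> the (payoff s1') p \<le> the (payoff s1) p"
    and i2: "(\<exists>f. payoff_rel s2' f) \<and> the (payoff s2') p \<le> the (payoff s2) p" by auto
  show ?case
  proof (cases c)
    case d then show ?thesis using i1 by (simp only: payoff_node_d rel_d)
  next
    case r then show ?thesis using i2 by (simp only: payoff_node_r rel_r)
  qed
qed

theorem mainTheorem13:
  fixes s :: strat
  shows "SPE s \<Longrightarrow> Nash s"
proof -
  assume h: "SPE s"
  show "Nash s" unfolding Nash_def
  proof (intro allI impI)
    fix p s' assume c: "convertible p s s'"
    have m: "(\<exists>f. payoff_rel s' f) \<and> the (payoff s') p \<le> the (payoff s) p"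
      using main[OF c] h unfolding SPE_def by blast
    have "\<exists>f. payoff_rel s f" using SPE_conv h unfolding SPE_def by blast
    then show "payoff s \<noteq> None \<and> payoff s' \<noteq> None \<and> the (payoff s') p \<le> the (payoff s) p"
      using m payoff_Some by fastforce
  qed
qed

end
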